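(* Let $n\ge 1$, let $t_1<\dots<t_n$ be real numbers, $t_0=-\infty$, $t_{n+1}=+\infty$, let $p_0,\dots,p_n>0$, and let $p=\sum_{j=0}^n p_j\chi_{I_j}$ where $I_0=(-\infty,t_1]$, $I_j=(t_j,t_{j+1}]$ for $1\le j\le n-1$, $I_n=(t_n,\infty)$. Put $q_k=p_k^{-1/2}$. Then there exist analytic functions $a_l^+,b_l^+$ ($0\le l\le n-1$) and $a_j^-,b_j^-$ ($1\le j\le n$) from $\mathbb{C}\setminus(-\infty,0]$ to $\mathbb{C}$ such that for every $z\in\mathbb{C}\setminus(-\infty,0]$ the functions $$\Phi^+(z,x)=\begin{cases}a_l^+(z)e^{iq_l\sqrt z x}+b_l^+(z)e^{-iq_l\sqrt z x}, & x\in I_l,\ 0\le l\le n-1,\\ e^{iq_n\sqrt z x}, & x\in I_n,\end{cases}$$ $$\Phi^-(z,x)=\begin{cases}e^{-iq_0\sqrt z x}, & x\in I_0,\\ a_j^-(z)e^{iq_j\sqrt z x}+b_j^-(z)e^{-iq_j\sqrt z x}, & x\in I_j,\ 1\le j\le n,\end{cases}$$ are solutions of $(\tau_p-z)f=0$ that depend analytically on $z\in\mathbb{C}\setminus(-\infty,0]$. If $\operatorname{Im}z>0$, then $(\Phi^+(z,\cdot),\Phi^-(z,\cdot))$ is a fundamental system of $(\tau_p-z)f=0$ such that $\Phi^+(z,\cdot)$ lies right and $\Phi^-(z,\cdot)$ lies left in $L^2(\mathbb{R})$. If $\operatorname{Im}z<0$, then $(\overline{\Phi^+(\bar z,\cdot)},\overline{\Phi^-(\bar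 z,\cdot)})$ is a fundamental system of $(\tau_p-z)f=0$ such that $\overline{\Phi^+(\bar z,\cdot)}$ lies right and $\overline{\Phi^-(\bar z,\cdot)}$ lies left in $L^2(\mathbb{R})$. Moreover, with $a_n^+=1$, $b_n^+=0$, $a_0^-=0$, $b_0^-=1$ and $$L_k(z)=\frac12\begin{bmatrix}\left(1+\frac{q_k}{q_{k-1}}\right)e^{it_k(q_{k-1}-q_k)\sqrt z} & \left(1-\frac{q_k}{q_{k-1}}\right)e^{-it_k(q_{k-1}+q_k)\sqrt z}\\ \left(1-\frac{q_k}{q_{k-1}}\right)e^{it_k(q_{k-1}+q_k)\sqrt z} & \left(1+\frac{q_k}{q_{k-1}}\right)e^{-it_k(q_{k-1}-q_k)\sqrt z}\end{bmatrix},\quad 1\le k\le n,$$ the coefficients satisfy the recursion relations $\begin{bmatrix}a_k^\pm(z)\\ b_k^\pm(z)\end{bmatrix}=L_k(z)\begin{bmatrix}a_{k-1}^\pm(z)\\ b_{k-1}^\pm(z)\end{bmatrix}$ (for all $k$ for which both sides are defined), and consequently the coefficients $a^\pm_k,b^\pm_k$ are almost periodic trigonometric polynomials in the variable $\sqrt z$, i.e. finite sums $\sum_m c_m e^{i\lambda_m\sqrt z}$ with $c_m\in\mathbb{C}$, $\lambda_m\in\mathbb{R}$.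
   Context: $\sqrt z$ denotes the principal square root: for $z=re^{i\theta}$ with $r>0$, $-\pi<\theta<\pi$, $\sqrt z=\sqrt r e^{i\theta/2}$. A solution of $(\tau_p-z)f=0$ is a function $f:\mathbb{R}\to\mathbb{C}$ such that $f$ and $pf'$ are locally absolutely continuous on $\mathbb{R}$ and $-(pf')'=zf$ almost everywhere. A function $f$ lies right (resp. left) in $L^2(\mathbb{R})$ if $f\in L^2(c,\infty)$ (resp. $f\in L^2(-\infty,c)$) for some $c\in\mathbb{R}$. *)

theory Defs
  imports "HOL-Analysis.Analysis"
begin

definition Iset :: "nat \<Rightarrow> (nat \<Rightarrow> real) \<Rightarrow> nat \<Rightarrow> real set" where
  "Iset n t j = (if j = 0 then {..t 1} else if j < n then {t j<..t (Suc j)} else {t n<..})"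

definition pstep :: "nat \<Rightarrow> (nat \<Rightarrow> real) \<Rightarrow> (nat \<Rightarrow> real) \<Rightarrow> real \<Rightarrow> real" where
  "pstep n t p x = (\<Sum>j\<le>n. p j * indicator (Iset n t j) x)"

definition qcoef :: "(nat \<Rightarrow> real) \<Rightarrow> nat \<Rightarrow> real" where
  "qcoef p k = p k powr (-1/2)"

definition abs_cont_on :: "real \<Rightarrow> real \<Rightarrow> (real \<Rightarrow> complex) \<Rightarrow> bool" where
  "abs_cont_on a b f \<longleftrightarrow>
     (\<forall>\<epsilon>>0. \<exists>\<delta>>0. \<forall>(N::nat) (u::nat \<Rightarrow> real) (v::nat \<Rightarrow> real).
        (\<forall>i<N. a \<le> u i \<and> u i \<le> v i \<and> v i \<le> b) \<and>
        (\<forall>i<N. \<forall>j<N. i \<noteq> j \<longrightarrow> v i \<le> u j \<or> v j \<le> u i) \<and>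
        (\<Sum>i<N. v i - u i) < \<delta>
        \<longrightarrow> (\<Sum>i<N. norm (f (v i) - f (u i))) < \<epsilon>)"

definition loc_abs_cont :: "(real \<Rightarrow> complex) \<Rightarrow> bool" where
  "loc_abs_cont f \<longleftrightarrow> (\<forall>a b. a \<le> b \<longrightarrow> abs_cont_on a b f)"

text \<open>f is a solution of (tau_p - z) f = 0: f and p f' locally absolutely continuous
  (g is the locally absolutely continuous representative of p f') and -(p f')' = z f a.e.\<close>
definition is_solution :: "(real \<Rightarrow> real) \<Rightarrow> complex \<Rightarrow> (real \<Rightarrow> complex) \<Rightarrow> bool" where
  "is_solution p z f \<longleftrightarrow> loc_abs_cont f \<and>
     (\<exists>g. loc_abs_cont g \<and>
        (AE x in lborel. \<exists>d. (f has_vector_derivative d) (at x) \<and> complex_of_real (p x) * d = g x) \<and>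
        (AE x in lborel. (g has_vector_derivative (- z * f x)) (at x)))"

definition fundamental_system :: "(real \<Rightarrow> real) \<Rightarrow> complex \<Rightarrow> (real \<Rightarrow> complex) \<Rightarrow> (real \<Rightarrow> complex) \<Rightarrow> bool" where
  "fundamental_system p z f g \<longleftrightarrow> is_solution p z f \<and> is_solution p z g \<and>
     (\<forall>c1 c2 :: complex. (\<forall>x. c1 * f x + c2 * g x = 0) \<longrightarrow> c1 = 0 \<and> c2 = 0)"

definition lies_right_L2 :: "(real \<Rightarrow> complex) \<Rightarrow> bool" where
  "lies_right_L2 f \<longleftrightarrow> (\<exists>c. set_borel_measurable lborel {c<..} f \<and>
      set_integrable lborel {c<..} (\<lambda>x. (norm (f x))\<^sup>2))"

definition lies_left_L2 :: "(real \<Rightarrow> complex) \<Rightarrow> bool" where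
  "lies_left_L2 f \<longleftrightarrow> (\<exists>c. set_borel_measurable lborel {..<c} f \<and>
      set_integrable lborel {..<c} (\<lambda>x. (norm (f x))\<^sup>2))"

definition slit :: "complex set" where
  "slit = - \<real>\<^sub>\<le>\<^sub>0"

definition Phi_plus :: "nat \<Rightarrow> (nat \<Rightarrow> real) \<Rightarrow> (nat \<Rightarrow> real) \<Rightarrow> (nat \<Rightarrow> complex \<Rightarrow> complex)
    \<Rightarrow> (nat \<Rightarrow> complex \<Rightarrow> complex) \<Rightarrow> complex \<Rightarrow> real \<Rightarrow> complex" where
  "Phi_plus n t q a b z x =
     (\<Sum>l<n. if x \<in> Iset n t l then
         a l z * exp (\<i> * of_real (q l) * csqrt z * of_real x)
       + b l z * exp (- \<i> * of_real (q l) * csqrt z * of_real x) else 0)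
     + (if x \<in> Iset n t n then exp (\<i> * of_real (q n) * csqrt z * of_real x) else 0)"

definition Phi_minus :: "nat \<Rightarrow> (nat \<Rightarrow> real) \<Rightarrow> (nat \<Rightarrow> real) \<Rightarrow> (nat \<Rightarrow> complex \<Rightarrow> complex)
    \<Rightarrow> (nat \<Rightarrow> complex \<Rightarrow> complex) \<Rightarrow> complex \<Rightarrow> real \<Rightarrow> complex" where
  "Phi_minus n t q a b z x =
     (if x \<in> Iset n t 0 then exp (- \<i> * of_real (q 0) * csqrt z * of_real x) else 0)
     + (\<Sum>j\<in>{1..n}. if x \<in> Iset n t j then
         a j z * exp (\<i> * of_real (q j) * csqrt z * of_real x)
       + b j z * exp (- \<i> * of_real (q j) * csqrt z * of_real x) else 0)"

definition Lmat :: "(nat \<Rightarrow> real) \<Rightarrow> (nat \<Rightarrow> real) \<Rightarrow> nat \<Rightarrow> complex \<Rightarrow> complex^2^2" where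
  "Lmat t q k z = (let qk = q k; ql = q (k - 1); r = complex_of_real (qk / ql); s = csqrt z; tk = t k in
     vector [
       vector [(1 / 2) * (1 + r) * exp (\<i> * of_real (tk * (ql - qk)) * s),
               (1 / 2) * (1 - r) * exp (- \<i> * of_real (tk * (ql + qk)) * s)],
       vector [(1 / 2) * (1 - r) * exp (\<i> * of_real (tk * (ql + qk)) * s),
               (1 / 2) * (1 + r) * exp (- \<i> * of_real (tk * (ql - qk)) * s)]])"

definition trig_poly_sqrt :: "(complex \<Rightarrow> complex) \<Rightarrow> bool" where
  "trig_poly_sqrt g \<longleftrightarrow> (\<exists>cs :: (complex \<times> real) list. \<forall>z\<in>slit.
      g z = (\<Sum>(c, l)\<leftarrow>cs. c * exp (\<i> * of_real l * csqrt z)))"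

end

theory Submission
  imports Defs
begin
locale stp =
  fixes n :: nat and t :: "nat \<Rightarrow> real" and p :: "nat \<Rightarrow> real"
  assumes n_ge: "n \<ge> 1"
    and t_mono: "\<And>j. 1 \<le> j \<Longrightarrow> j < n \<Longrightarrow> t j < t (Suc j)"
    and p_pos: "\<And>j. j \<le> n \<Longrightarrow> p j > 0"
begin

lemma t_le: "1 \<le> i \<Longrightarrow> i \<le> j \<Longrightarrow> j \<le> n \<Longrightarrow> t i \<le> t j"
proof (induction j)
  case 0 then show ?case by simp
next
  case (Suc j)
  show ?case
  proof (cases "i = Suc j")
    case False
    then have "i \<le> j" using Suc by simp
    then have "t i \<le> t j" using Suc by simp
    also have "t j < t (Suc j)" using t_mono[of j] Suc \<open>i \<le> j\<close> by simp
    finally show ?thesis by simp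
  qed simp
qed

lemma t_less: "1 \<le> i \<Longrightarrow> i < j \<Longrightarrow> j \<le> n \<Longrightarrow> t i < t j"
  using t_le[of "Suc i" j] t_mono[of i] by (cases j) auto

definition idx :: "real \<Rightarrow> nat" where
  "idx x = Max (insert 0 {j\<in>{1..n}. t j < x})"

lemma idx_le: "idx x \<le> n"
  unfolding idx_def by (subst Max_le_iff) auto

lemma in_Iset_idx: "x \<in> Iset n t (idx x)"
proof -
  let ?S = "insert 0 {j\<in>{1..n}. t j < x}"
  have fin: "finite ?S" by auto
  have mem: "idx x \<in> ?S" unfolding idx_def using fin by (rule Max_in) auto
  have ub: "\<And>j. j \<in> ?S \<Longrightarrow> j \<le> idx x" unfolding idx_def using fin by auto
  show ?thesis
  proof (cases "idx x = 0")
    case True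
    then have "\<not> t 1 < x" using ub[of 1] n_ge by auto
    then show ?thesis using True by (simp add: Iset_def)
  next
    case False
    then have j: "1 \<le> idx x" "idx x \<le> n" "t (idx x) < x" using mem by auto
    show ?thesis
    proof (cases "idx x < n")
      case True
      then have "\<not> t (Suc (idx x)) < x" using ub[of "Suc (idx x)"] by auto
      then show ?thesis using True j False by (simp add: Iset_def)
    next
      case False
      then show ?thesis using j \<open>idx x \<noteq> 0\<close> by (simp add: Iset_def)
    qed
  qed
qed

lemma Iset_unique: "x \<in> Iset n t i \<Longrightarrow> x \<in> Iset n t j \<Longrightarrow> i \<le> n \<Longrightarrow> j \<le> n \<Longrightarrow> i = j"
proof -
  have *: "x \<in> Iset n t i \<Longrightarrow> x \<in> Iset n t j \<Longrightarrow> i \<le> n \<Longrightarrow> j \<le> n \<Longrightarrow> i < j \<Longrightarrow> False" for i j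
  proof -
    assume a: "x \<in> Iset n t i" "x \<in> Iset n t j" "i \<le> n" "j \<le> n" "i < j"
    have "x \<le> t (Suc i)" using a by (auto simp: Iset_def split: if_splits)
    moreover have "t (Suc i) \<le> t j" using t_le[of "Suc i" j] a by auto
    moreover have "t j < x" using a by (auto simp: Iset_def split: if_splits)
    ultimately show False by simp
  qed
  assume "x \<in> Iset n t i" "x \<in> Iset n t j" "i \<le> n" "j \<le> n"
  then show "i = j" using *[of i j] *[of j i] by (cases "i < j"; cases "j < i") auto
qed

lemma Iset_iff: "j \<le> n \<Longrightarrow> x \<in> Iset n t j \<longleftrightarrow> j = idx x"
  using Iset_unique[of x j "idx x"] in_Iset_idx[of x] idx_le[of x] by auto

lemma sum_Iset: "(\<Sum>j\<le>n. if x \<in> Iset n t j then h j else 0) = h (idx x)"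
proof -
  have "(\<Sum>j\<le>n. if x \<in> Iset n t j then h j else 0) = (\<Sum>j\<le>n. if j = idx x then h j else 0)"
    by (rule sum.cong) (auto simp: Iset_iff)
  also have "\<dots> = h (idx x)" using idx_le[of x] by simp
  finally show ?thesis .
qed

lemma pstep_idx: "pstep n t p x = p (idx x)"
proof -
  have "pstep n t p x = (\<Sum>j\<le>n. if x \<in> Iset n t j then p j else 0)"
    unfolding pstep_def by (rule sum.cong) (auto simp: indicator_def)
  then show ?thesis using sum_Iset by simp
qed

definition Tset :: "real set" where "Tset = t ` {1..n}"

definition Oset :: "nat \<Rightarrow> real set" where
  "Oset j = (if j = 0 then {..<t 1} else if j < n then {t j<..<t (Suc j)} else {t n<..})"

lemma open_Oset: "open (Oset j)" by (auto simp: Oset_def)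

lemma Oset_sub: "Oset j \<subseteq> Iset n t j" by (auto simp: Oset_def Iset_def)

lemma idx_Oset: "x \<notin> Tset \<Longrightarrow> x \<in> Oset (idx x)"
  using in_Iset_idx[of x] idx_le[of x] n_ge
  by (auto simp: Oset_def Iset_def Tset_def split: if_splits)

lemma idx_eq_Oset: "y \<in> Oset j \<Longrightarrow> j \<le> n \<Longrightarrow> idx y = j"
  using Oset_sub[of j] Iset_iff[of j y] by auto

lemma finite_Tset: "finite Tset" by (simp add: Tset_def)

lemma idx_t: "k \<in> {1..n} \<Longrightarrow> idx (t k) = k - 1"
proof -
  assume k: "k \<in> {1..n}"
  have "t k \<in> Iset n t (k - 1)"
    using k t_less[of "k - 1" k] by (auto simp: Iset_def)
  then show ?thesis using Iset_iff[of "k - 1" "t k"] k by auto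
qed

lemma ev_left: "k \<in> {1..n} \<Longrightarrow> eventually (\<lambda>y. y \<in> Oset (k - 1)) (at_left (t k))"
proof -
  assume k: "k \<in> {1..n}"
  show ?thesis
  proof (cases "k = 1")
    case True
    have "t 1 - 1 < t 1" by simp
    from eventually_at_left_real[OF this] have "eventually (\<lambda>y. y \<in> Oset 0) (at_left (t 1))"
      by (rule eventually_mono) (auto simp: Oset_def)
    then show ?thesis using True by simp
  next
    case False
    then have "t (k - 1) < t k" using k t_less[of "k - 1" k] by auto
    from eventually_at_left_real[OF this] show ?thesis
      by (rule eventually_mono) (use k False in \<open>auto simp: Oset_def\<close>)
  qed
qed

lemma ev_right: "k \<in> {1..n} \<Longrightarrow> eventually (\<lambda>y. y \<in> Oset k) (at_right (t k))"
proof -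
  assume k: "k \<in> {1..n}"
  show ?thesis
  proof (cases "k = n")
    case True
    have "t n < t n + 1" by simp
    from eventually_at_right_real[OF this] have "eventually (\<lambda>y. y \<in> Oset n) (at_right (t n))"
      by (rule eventually_mono) (use n_ge in \<open>auto simp: Oset_def\<close>)
    then show ?thesis using True by simp
  next
    case False
    then have "t k < t (Suc k)" using k t_mono[of k] by auto
    from eventually_at_right_real[OF this] show ?thesis
      by (rule eventually_mono) (use k False in \<open>auto simp: Oset_def\<close>)
  qed
qed

lemma piecewise:
  fixes h h' :: "nat \<Rightarrow> real \<Rightarrow> complex"
  assumes der: "\<And>j x. (h j has_vector_derivative h' j x) (at x)"
    and cont': "\<And>j. continuous_on UNIV (h' j)"
    and match: "\<And>k. k \<in> {1..n} \<Longrightarrow> h (k - 1) (t k) = h k (t k)"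
  shows "\<And>x. x \<notin> Tset \<Longrightarrow> ((\<lambda>x. h (idx x) x) has_vector_derivative h' (idx x) x) (at x)"
    and "\<And>x. isCont (\<lambda>x. h (idx x) x) x"
    and "loc_abs_cont (\<lambda>x. h (idx x) x)"
proof -
  let ?H = "\<lambda>x. h (idx x) x"
  have hc: "isCont (h j) x" for j x
    using der[of j x] has_vector_derivative_continuous by blast
  show D: "(?H has_vector_derivative h' (idx x) x) (at x)" if "x \<notin> Tset" for x
  proof (rule has_vector_derivative_transform_within_open[OF der open_Oset])
    show "x \<in> Oset (idx x)" using idx_Oset that .
    show "h (idx x) y = ?H y" if "y \<in> Oset (idx x)" for y
      using idx_eq_Oset[OF that idx_le] by simp
  qed
  show C: "isCont ?H x" for x
  proof (cases "x \<in> Tset")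
    case False
    then show ?thesis using D has_vector_derivative_continuous by blast
  next
    case True
    then obtain k where k: "k \<in> {1..n}" "x = t k" by (auto simp: Tset_def)
    have Hx: "?H x = h (k - 1) x" using idx_t k by simp
    have "(?H \<longlongrightarrow> ?H x) (at_left x)"
    proof -
      have "(h (k - 1) \<longlongrightarrow> ?H x) (at_left x)"
        using hc[where j="k - 1" and x=x] Hx by (simp add: continuous_at_imp_continuous_within continuous_within isCont_def filterlim_at_split)
      moreover have ev: "eventually (\<lambda>y. h (k - 1) y = ?H y) (at_left x)"
        unfolding k(2)
      proof (rule eventually_mono[OF ev_left[OF k(1)]])
        fix y assume "y \<in> Oset (k - 1)"
        then have "idx y = k - 1" using idx_eq_Oset[of y "k - 1"] k(1) by auto
        then show "h (k - 1) y = ?H y" by simp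
      qed
      ultimately show ?thesis using tendsto_cong[OF ev] by simp
    qed
    moreover have "(?H \<longlongrightarrow> ?H x) (at_right x)"
    proof -
      have "(h k \<longlongrightarrow> ?H x) (at_right x)"
        using hc[where j=k and x=x] Hx match[OF k(1)] k(2) by (simp add: isCont_def filterlim_at_split)
      moreover have ev: "eventually (\<lambda>y. h k y = ?H y) (at_right x)"
        unfolding k(2)
      proof (rule eventually_mono[OF ev_right[OF k(1)]])
        fix y assume "y \<in> Oset k"
        then have "idx y = k" using idx_eq_Oset[of y k] k(1) by auto
        then show "h k y = ?H y" by simp
      qed
      ultimately show ?thesis using tendsto_cong[OF ev] by simp
    qed
    ultimately show ?thesis by (simp add: isCont_def filterlim_at_split)
  qed
  show "loc_abs_cont ?H"
    unfolding loc_abs_cont_def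
  proof (intro allI impI)
    fix a b :: real assume ab: "a \<le> b"
    let ?K = "\<lambda>y. (\<Sum>j\<le>n. norm (h' j y))"
    have "continuous_on {a..b} ?K"
      by (intro continuous_intros continuous_on_subset[OF cont'] subset_UNIV)
    then have "bounded (?K ` {a..b})" by (intro compact_imp_bounded compact_continuous_image) auto
    then obtain B where Bb: "\<forall>y\<in>{a..b}. norm (?K y) \<le> B" unfolding bounded_iff by blast
    have B: "\<And>y. y \<in> {a..b} \<Longrightarrow> norm (?K y) \<le> B" using Bb by blast
    have "norm (?K a) \<le> B" using B ab by simp
    then have B0: "0 \<le> B" using norm_ge_zero[of "?K a"] by linarith
    have hb: "norm (h' (idx y) y) \<le> B" if "y \<in> {a..b}" for y
    proof -
      have "norm (h' (idx y) y) \<le> ?K y"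
        using idx_le[of y] by (intro member_le_sum) auto
      also have "\<dots> \<le> B" using B[OF that] by simp
      finally show ?thesis .
    qed
    have lip: "norm (?H v - ?H u) \<le> B * (v - u)" if "a \<le> u" "u \<le> v" "v \<le> b" for u v
    proof -
      have int: "((\<lambda>y. h' (idx y) y) has_integral (?H v - ?H u)) {u..v}"
        by (rule fundamental_theorem_of_calculus_strong[OF finite_Tset \<open>u \<le> v\<close>])
           (auto intro!: D continuous_at_imp_continuous_on C)
      have hb': "\<And>y. y \<in> {u..v} - Tset \<Longrightarrow> norm (h' (idx y) y) \<le> B"
        using hb that by auto
      show ?thesis using has_integral_bound_real[OF B0 finite_Tset int hb'] that by simp
    qed
    show "abs_cont_on a b ?H"
      unfolding abs_cont_on_def
    proof (intro allI impI)
      fix \<epsilon> :: real assume e: "\<epsilon> > 0"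
      show "\<exists>\<delta>>0. \<forall>(N::nat) u v. (\<forall>i<N. a \<le> u i \<and> u i \<le> v i \<and> v i \<le> b) \<and>
        (\<forall>i<N. \<forall>j<N. i \<noteq> j \<longrightarrow> v i \<le> u j \<or> v j \<le> u i) \<and>
        (\<Sum>i<N. v i - u i) < \<delta> \<longrightarrow> (\<Sum>i<N. norm (?H (v i) - ?H (u i))) < \<epsilon>"
      proof (intro exI[of _ "\<epsilon> / (B + 1)"] conjI allI impI)
        show "\<epsilon> / (B + 1) > 0" using e B0 by simp
        fix N :: nat and u v :: "nat \<Rightarrow> real"
        assume as: "(\<forall>i<N. a \<le> u i \<and> u i \<le> v i \<and> v i \<le> b) \<and>
          (\<forall>i<N. \<forall>j<N. i \<noteq> j \<longrightarrow> v i \<le> u j \<or> v j \<le> u i) \<and>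
          (\<Sum>i<N. v i - u i) < \<epsilon> / (B + 1)"
        have "(\<Sum>i<N. norm (?H (v i) - ?H (u i))) \<le> (\<Sum>i<N. B * (v i - u i))"
          using as lip by (intro sum_mono) auto
        also have "\<dots> = B * (\<Sum>i<N. v i - u i)" by (simp add: sum_distrib_left)
        also have "\<dots> \<le> (B + 1) * (\<Sum>i<N. v i - u i)"
          using as by (intro mult_right_mono) (auto intro!: sum_nonneg)
        also have "\<dots> < (B + 1) * (\<epsilon> / (B + 1))"
          using as B0 by (intro mult_strict_left_mono) auto
        also have "\<dots> = \<epsilon>" using B0 by simp
        finally show "(\<Sum>i<N. norm (?H (v i) - ?H (u i))) < \<epsilon>" .
      qed
    qed
  qed
qed

end

definition Lf :: "(nat \<Rightarrow> real) \<Rightarrow> (nat \<Rightarrow> real) \<Rightarrow> nat \<Rightarrow> complex \<Rightarrow> complex \<times> complex \<Rightarrow> complex \<times> complex" where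
  "Lf t q k z ab = (let qk = q k; ql = q (k - 1); r = complex_of_real (qk / ql); s = csqrt z; tk = t k in
     ((1 / 2) * (1 + r) * exp (\<i> * of_real (tk * (ql - qk)) * s) * fst ab
        + (1 / 2) * (1 - r) * exp (- \<i> * of_real (tk * (ql + qk)) * s) * snd ab,
      (1 / 2) * (1 - r) * exp (\<i> * of_real (tk * (ql + qk)) * s) * fst ab
        + (1 / 2) * (1 + r) * exp (- \<i> * of_real (tk * (ql - qk)) * s) * snd ab))"

definition Mf :: "(nat \<Rightarrow> real) \<Rightarrow> (nat \<Rightarrow> real) \<Rightarrow> nat \<Rightarrow> complex \<Rightarrow> complex \<times> complex \<Rightarrow> complex \<times> complex" where
  "Mf t q k z ab = (let qk = q k; ql = q (k - 1); r = complex_of_real (ql / qk); s = csqrt z; tk = t k in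
     ((1 / 2) * (1 + r) * exp (\<i> * of_real (tk * (qk - ql)) * s) * fst ab
        + (1 / 2) * (1 - r) * exp (- \<i> * of_real (tk * (qk + ql)) * s) * snd ab,
      (1 / 2) * (1 - r) * exp (\<i> * of_real (tk * (qk + ql)) * s) * fst ab
        + (1 / 2) * (1 + r) * exp (- \<i> * of_real (tk * (qk - ql)) * s) * snd ab))"

lemma Lmat_Lf: "Lmat t q k z *v vector [a, b] = vector [fst (Lf t q k z (a, b)), snd (Lf t q k z (a, b))]"
  unfolding Lmat_def Lf_def Let_def
  by (simp add: vec_eq_iff forall_2 matrix_vector_mult_def sum_2 algebra_simps)

lemma exp_rw:
  fixes s :: complex and a b tk :: real
  shows "exp (\<i> * of_real (tk * (a - b)) * s) = exp (\<i> * of_real a * s * of_real tk) / exp (\<i> * of_real b * s * of_real tk)"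
    and "exp (- \<i> * of_real (tk * (a + b)) * s) = 1 / (exp (\<i> * of_real a * s * of_real tk) * exp (\<i> * of_real b * s * of_real tk))"
    and "exp (\<i> * of_real (tk * (a + b)) * s) = exp (\<i> * of_real a * s * of_real tk) * exp (\<i> * of_real b * s * of_real tk)"
    and "exp (- \<i> * of_real (tk * (a - b)) * s) = exp (\<i> * of_real b * s * of_real tk) / exp (\<i> * of_real a * s * of_real tk)"
    and "exp (- \<i> * of_real a * s * of_real tk) = 1 / exp (\<i> * of_real a * s * of_real tk)"
proof -
  have 1: "\<i> * of_real (tk * (a - b)) * s = \<i> * of_real a * s * of_real tk - \<i> * of_real b * s * of_real tk"
    by (simp add: algebra_simps)
  show "exp (\<i> * of_real (tk * (a - b)) * s) = exp (\<i> * of_real a * s * of_real tk) / exp (\<i> * of_real b * s * of_real tk)"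
    unfolding 1 exp_diff ..
  have 2: "- \<i> * of_real (tk * (a + b)) * s = - (\<i> * of_real a * s * of_real tk + \<i> * of_real b * s * of_real tk)"
    by (simp add: algebra_simps)
  show "exp (- \<i> * of_real (tk * (a + b)) * s) = 1 / (exp (\<i> * of_real a * s * of_real tk) * exp (\<i> * of_real b * s * of_real tk))"
    unfolding 2 exp_minus exp_add by (simp add: divide_inverse)
  have 3: "\<i> * of_real (tk * (a + b)) * s = \<i> * of_real a * s * of_real tk + \<i> * of_real b * s * of_real tk"
    by (simp add: algebra_simps)
  show "exp (\<i> * of_real (tk * (a + b)) * s) = exp (\<i> * of_real a * s * of_real tk) * exp (\<i> * of_real b * s * of_real tk)"
    unfolding 3 exp_add ..
  have 4: "- \<i> * of_real (tk * (a - b)) * s = \<i> * of_real b * s * of_real tk - \<i> * of_real a * s * of_real tk"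
    by (simp add: algebra_simps)
  show "exp (- \<i> * of_real (tk * (a - b)) * s) = exp (\<i> * of_real b * s * of_real tk) / exp (\<i> * of_real a * s * of_real tk)"
    unfolding 4 exp_diff ..
  have 5: "- \<i> * of_real a * s * of_real tk = - (\<i> * of_real a * s * of_real tk)" by simp
  show "exp (- \<i> * of_real a * s * of_real tk) = 1 / exp (\<i> * of_real a * s * of_real tk)"
    by (simp add: 5 exp_minus divide_inverse)
qed

lemma LM:
  assumes "q (k - 1) > 0" "q k > 0"
  shows "Lf t q k z (Mf t q k z ab) = ab"
proof -
  obtain a b where ab: "ab = (a, b)" by force
  define E where "E = exp (\<i> * of_real (q (k - 1)) * csqrt z * of_real (t k))"
  define F where "F = exp (\<i> * of_real (q k) * csqrt z * of_real (t k))"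
  have EF: "E \<noteq> 0" "F \<noteq> 0" unfolding E_def F_def by simp_all
  show ?thesis
    unfolding ab Lf_def Mf_def Let_def exp_rw E_def[symmetric] F_def[symmetric]
    using EF assms by (auto simp: field_simps)
qed


primrec cmr :: "(nat \<Rightarrow> real) \<Rightarrow> (nat \<Rightarrow> real) \<Rightarrow> nat \<Rightarrow> complex \<Rightarrow> complex \<times> complex" where
  "cmr t q 0 z = (0, 1)"
| "cmr t q (Suc k) z = Lf t q (Suc k) z (cmr t q k z)"

primrec cpr :: "nat \<Rightarrow> (nat \<Rightarrow> real) \<Rightarrow> (nat \<Rightarrow> real) \<Rightarrow> nat \<Rightarrow> complex \<Rightarrow> complex \<times> complex" where
  "cpr n t q 0 z = (1, 0)"
| "cpr n t q (Suc m) z = Mf t q (n - m) z (cpr n t q m z)"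

lemma trig_const: "trig_poly_sqrt (\<lambda>z. c)"
  unfolding trig_poly_sqrt_def by (rule exI[of _ "[(c, 0)]"]) simp

lemma trig_add: "trig_poly_sqrt f \<Longrightarrow> trig_poly_sqrt g \<Longrightarrow> trig_poly_sqrt (\<lambda>z. f z + g z)"
  unfolding trig_poly_sqrt_def
proof (elim exE)
  fix cs ds :: "(complex \<times> real) list"
  assume "\<forall>z\<in>slit. f z = (\<Sum>(c, l)\<leftarrow>cs. c * exp (\<i> * of_real l * csqrt z))"
    "\<forall>z\<in>slit. g z = (\<Sum>(c, l)\<leftarrow>ds. c * exp (\<i> * of_real l * csqrt z))"
  then show "\<exists>cs. \<forall>z\<in>slit. f z + g z = (\<Sum>(c, l)\<leftarrow>cs. c * exp (\<i> * of_real l * csqrt z))"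
    by (intro exI[of _ "cs @ ds"]) simp
qed

lemma sum_list_mexp:
  "c * exp (\<i> * of_real \<alpha> * s) * (\<Sum>(d, l)\<leftarrow>cs. d * exp (\<i> * of_real l * s)) =
   (\<Sum>(d, l)\<leftarrow>map (\<lambda>(d, l). (c * d, \<alpha> + l)) cs. d * exp (\<i> * of_real l * s))"
proof (induction cs)
  case Nil then show ?case by simp
next
  case (Cons a cs)
  obtain d l where a: "a = (d, l)" by force
  have "exp (\<i> * of_real (\<alpha> + l) * s) = exp (\<i> * of_real \<alpha> * s) * exp (\<i> * of_real l * s)"
    by (simp add: algebra_simps flip: exp_add)
  then show ?case using Cons by (simp add: a algebra_simps)
qed

lemma trig_mexp: "trig_poly_sqrt f \<Longrightarrow> trig_poly_sqrt (\<lambda>z. c * exp (\<i> * of_real \<alpha> * csqrt z) * f z)"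
  unfolding trig_poly_sqrt_def
proof (elim exE)
  fix cs :: "(complex \<times> real) list"
  assume "\<forall>z\<in>slit. f z = (\<Sum>(c, l)\<leftarrow>cs. c * exp (\<i> * of_real l * csqrt z))"
  then show "\<exists>cs. \<forall>z\<in>slit. c * exp (\<i> * of_real \<alpha> * csqrt z) * f z = (\<Sum>(c, l)\<leftarrow>cs. c * exp (\<i> * of_real l * csqrt z))"
    by (intro exI[of _ "map (\<lambda>(d, l). (c * d, \<alpha> + l)) cs"]) (simp add: sum_list_mexp)
qed

lemma trig_mexp': "trig_poly_sqrt f \<Longrightarrow> trig_poly_sqrt (\<lambda>z. c * exp (- \<i> * of_real \<alpha> * csqrt z) * f z)"
  using trig_mexp[of f c "- \<alpha>"] by simp

lemma an_exp: "(\<lambda>z. c * exp (\<i> * of_real \<alpha> * csqrt z) * f z) analytic_on slit"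
  if "f analytic_on slit"
  using that unfolding slit_def by (intro analytic_intros) auto

lemma an_exp': "(\<lambda>z. c * exp (- \<i> * of_real \<alpha> * csqrt z) * f z) analytic_on slit"
  if "f analytic_on slit"
  using that unfolding slit_def by (intro analytic_intros) auto

lemma Lf_props:
  assumes "trig_poly_sqrt (\<lambda>z. fst (v z))" "trig_poly_sqrt (\<lambda>z. snd (v z))"
  shows "trig_poly_sqrt (\<lambda>z. fst (Lf t q k z (v z)))" "trig_poly_sqrt (\<lambda>z. snd (Lf t q k z (v z)))"
  unfolding Lf_def Let_def fst_conv snd_conv
  by (intro trig_add trig_mexp trig_mexp' assms)+

lemma Mf_props:
  assumes "trig_poly_sqrt (\<lambda>z. fst (v z))" "trig_poly_sqrt (\<lambda>z. snd (v z))"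
  shows "trig_poly_sqrt (\<lambda>z. fst (Mf t q k z (v z)))" "trig_poly_sqrt (\<lambda>z. snd (Mf t q k z (v z)))"
  unfolding Mf_def Let_def fst_conv snd_conv
  by (intro trig_add trig_mexp trig_mexp' assms)+

lemma Lf_an:
  assumes "(\<lambda>z. fst (v z)) analytic_on slit" "(\<lambda>z. snd (v z)) analytic_on slit"
  shows "(\<lambda>z. fst (Lf t q k z (v z))) analytic_on slit" "(\<lambda>z. snd (Lf t q k z (v z))) analytic_on slit"
  unfolding Lf_def Let_def fst_conv snd_conv
  by (intro analytic_on_add an_exp an_exp' assms)+

lemma Mf_an:
  assumes "(\<lambda>z. fst (v z)) analytic_on slit" "(\<lambda>z. snd (v z)) analytic_on slit"
  shows "(\<lambda>z. fst (Mf t q k z (v z))) analytic_on slit" "(\<lambda>z. snd (Mf t q k z (v z))) analytic_on slit"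
  unfolding Mf_def Let_def fst_conv snd_conv
  by (intro analytic_on_add an_exp an_exp' assms)+

lemma cmr_props: "trig_poly_sqrt (\<lambda>z. fst (cmr t q k z)) \<and> trig_poly_sqrt (\<lambda>z. snd (cmr t q k z)) \<and>
   (\<lambda>z. fst (cmr t q k z)) analytic_on slit \<and> (\<lambda>z. snd (cmr t q k z)) analytic_on slit"
proof (induction k)
  case 0 then show ?case by (simp add: trig_const)
next
  case (Suc k)
  then show ?case using Lf_props[of "cmr t q k" t q "Suc k"] Lf_an[of "cmr t q k" t q "Suc k"] by simp
qed

lemma cpr_props: "trig_poly_sqrt (\<lambda>z. fst (cpr n t q m z)) \<and> trig_poly_sqrt (\<lambda>z. snd (cpr n t q m z)) \<and>
   (\<lambda>z. fst (cpr n t q m z)) analytic_on slit \<and> (\<lambda>z. snd (cpr n t q m z)) analytic_on slit"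
proof (induction m)
  case 0 then show ?case by (simp add: trig_const)
next
  case (Suc m)
  then show ?case using Mf_props[of "cpr n t q m" t q "n - m"] Mf_an[of "cpr n t q m" t q "n - m"] by simp
qed

lemma exp2_der:
  fixes a b K L :: complex
  shows "((\<lambda>x. a * exp (K * of_real x) + b * exp (L * of_real x)) has_vector_derivative
     (a * K * exp (K * of_real x) + b * L * exp (L * of_real x))) (at x)"
proof -
  have "((\<lambda>w. a * exp (K * w) + b * exp (L * w)) has_field_derivative
     (a * K * exp (K * of_real x) + b * L * exp (L * of_real x))) (at (of_real x))"
    by (auto intro!: derivative_eq_intros simp: algebra_simps)
  from has_vector_derivative_real_field[OF this] show ?thesis .
qed

context stp begin

lemma q_pos: "j \<le> n \<Longrightarrow> qcoef p j > 0"
  using p_pos[of j] by (simp add: qcoef_def)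

lemma pq: "j \<le> n \<Longrightarrow> p j * (qcoef p j)\<^sup>2 = 1"
proof -
  assume j: "j \<le> n"
  have "(qcoef p j)\<^sup>2 = p j powr (-1/2) * p j powr (-1/2)" by (simp add: qcoef_def power2_eq_square)
  also have "\<dots> = p j powr (-1)" by (simp flip: powr_add)
  also have "\<dots> = 1 / p j" using p_pos[OF j] by (simp add: powr_minus divide_inverse)
  finally show ?thesis using p_pos[OF j] by simp
qed

definition uf :: "complex \<Rightarrow> (nat \<Rightarrow> complex) \<Rightarrow> (nat \<Rightarrow> complex) \<Rightarrow> nat \<Rightarrow> real \<Rightarrow> complex" where
  "uf z A B j x = A j * exp (\<i> * of_real (qcoef p j) * csqrt z * of_real x)
     + B j * exp (- \<i> * of_real (qcoef p j) * csqrt z * of_real x)"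

definition duf :: "complex \<Rightarrow> (nat \<Rightarrow> complex) \<Rightarrow> (nat \<Rightarrow> complex) \<Rightarrow> nat \<Rightarrow> real \<Rightarrow> complex" where
  "duf z A B j x = \<i> * of_real (qcoef p j) * csqrt z * (A j * exp (\<i> * of_real (qcoef p j) * csqrt z * of_real x)
     - B j * exp (- \<i> * of_real (qcoef p j) * csqrt z * of_real x))"

definition wf :: "complex \<Rightarrow> (nat \<Rightarrow> complex) \<Rightarrow> (nat \<Rightarrow> complex) \<Rightarrow> nat \<Rightarrow> real \<Rightarrow> complex" where
  "wf z A B j x = of_real (p j) * duf z A B j x"

definition dwf :: "complex \<Rightarrow> (nat \<Rightarrow> complex) \<Rightarrow> (nat \<Rightarrow> complex) \<Rightarrow> nat \<Rightarrow> real \<Rightarrow> complex" where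
  "dwf z A B j x = of_real (p j) * (\<i> * of_real (qcoef p j) * csqrt z)\<^sup>2 * uf z A B j x"

lemma uf_der: "(uf z A B j has_vector_derivative duf z A B j x) (at x)"
proof -
  have "uf z A B j = (\<lambda>x. A j * exp ((\<i> * of_real (qcoef p j) * csqrt z) * of_real x)
     + B j * exp ((- \<i> * of_real (qcoef p j) * csqrt z) * of_real x))"
    by (simp add: uf_def fun_eq_iff)
  then show ?thesis
    by (simp only:) (rule has_vector_derivative_eq_rhs[OF exp2_der], simp add: duf_def algebra_simps)
qed

lemma wf_der: "(wf z A B j has_vector_derivative dwf z A B j x) (at x)"
proof -
  let ?K = "\<i> * of_real (qcoef p j) * csqrt z"
  have "wf z A B j = (\<lambda>x. (of_real (p j) * ?K * A j) * exp (?K * of_real x)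
     + (- of_real (p j) * ?K * B j) * exp ((- \<i> * of_real (qcoef p j) * csqrt z) * of_real x))"
    by (simp add: wf_def duf_def fun_eq_iff algebra_simps)
  then show ?thesis
    by (simp only:) (rule has_vector_derivative_eq_rhs[OF exp2_der],
        simp add: dwf_def uf_def algebra_simps power2_eq_square)
qed

lemma dwf_eq: "j \<le> n \<Longrightarrow> dwf z A B j x = - z * uf z A B j x"
proof -
  assume j: "j \<le> n"
  have "of_real (p j) * (\<i> * of_real (qcoef p j) * csqrt z)\<^sup>2 = - (of_real (p j * (qcoef p j)\<^sup>2) * (csqrt z)\<^sup>2)"
    by (simp add: power_mult_distrib)
  also have "\<dots> = - z" using pq[OF j] by simp
  finally show ?thesis by (simp add: dwf_def)
qed

lemma cont_duf: "continuous_on UNIV (duf z A B j)"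
  unfolding duf_def by (intro continuous_intros)

lemma cont_dwf: "continuous_on UNIV (dwf z A B j)"
  unfolding dwf_def uf_def by (intro continuous_intros)

lemma matching:
  assumes k: "k \<in> {1..n}"
    and rec: "(A k, B k) = Lf t (qcoef p) k z (A (k - 1), B (k - 1))"
  shows "uf z A B (k - 1) (t k) = uf z A B k (t k)" "wf z A B (k - 1) (t k) = wf z A B k (t k)"
proof -
  define ql where "ql = qcoef p (k - 1)"
  define qk where "qk = qcoef p k"
  have ql: "ql > 0" and qk: "qk > 0" using q_pos k by (auto simp: ql_def qk_def)
  have pl: "p (k - 1) = 1 / ql^2" using pq[of "k - 1"] k ql by (auto simp: ql_def field_simps)
  have pk: "p k = 1 / qk^2" using pq[of k] k qk by (auto simp: qk_def field_simps)
  define E where "E = exp (\<i> * of_real ql * csqrt z * of_real (t k))"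
  define F where "F = exp (\<i> * of_real qk * csqrt z * of_real (t k))"
  have EF: "E \<noteq> 0" "F \<noteq> 0" unfolding E_def F_def by simp_all
  define r where "r = complex_of_real (qk / ql)"
  have Ak: "A k = (1 / 2) * (1 + r) * (E / F) * A (k - 1) + (1 / 2) * (1 - r) * (1 / (E * F)) * B (k - 1)"
   and Bk: "B k = (1 / 2) * (1 - r) * (E * F) * A (k - 1) + (1 / 2) * (1 + r) * (F / E) * B (k - 1)"
    using rec unfolding Lf_def Let_def exp_rw ql_def[symmetric] qk_def[symmetric] E_def[symmetric] F_def[symmetric] r_def[symmetric]
    by simp_all
  have u1: "uf z A B (k - 1) (t k) = A (k - 1) * E + B (k - 1) * (1 / E)"
    unfolding uf_def exp_rw ql_def[symmetric] E_def[symmetric] ..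
  have u2: "uf z A B k (t k) = A k * F + B k * (1 / F)"
    unfolding uf_def exp_rw qk_def[symmetric] F_def[symmetric] ..
  have w1: "wf z A B (k - 1) (t k) = of_real (1 / ql^2) * (\<i> * of_real ql * csqrt z * (A (k - 1) * E - B (k - 1) * (1 / E)))"
    unfolding wf_def duf_def exp_rw ql_def[symmetric] E_def[symmetric] pl ..
  have w2: "wf z A B k (t k) = of_real (1 / qk^2) * (\<i> * of_real qk * csqrt z * (A k * F - B k * (1 / F)))"
    unfolding wf_def duf_def exp_rw qk_def[symmetric] F_def[symmetric] pk ..
  show "uf z A B (k - 1) (t k) = uf z A B k (t k)"
    unfolding u1 u2 Ak Bk using EF by (simp add: field_simps)
  show "wf z A B (k - 1) (t k) = wf z A B k (t k)"
    unfolding w1 w2 Ak Bk r_def using EF ql qk by (simp add: field_simps power2_eq_square)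
qed

end

context stp begin

lemma AE_notT: "AE x in lborel. x \<notin> Tset"
  by (rule AE_not_in[OF countable_imp_null_set_lborel[OF countable_finite[OF finite_Tset]]])

lemma gen_sol:
  assumes rec: "\<And>k. k \<in> {1..n} \<Longrightarrow> (A k, B k) = Lf t (qcoef p) k z (A (k - 1), B (k - 1))"
  shows "\<And>x. isCont (\<lambda>x. uf z A B (idx x) x) x"
    and "\<And>x. isCont (\<lambda>x. wf z A B (idx x) x) x"
    and "\<And>x. x \<notin> Tset \<Longrightarrow> ((\<lambda>x. uf z A B (idx x) x) has_vector_derivative duf z A B (idx x) x) (at x)"
    and "\<And>x. x \<notin> Tset \<Longrightarrow> ((\<lambda>x. wf z A B (idx x) x) has_vector_derivative (- z * uf z A B (idx x) x)) (at x)"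
    and "\<And>x. complex_of_real (pstep n t p x) * duf z A B (idx x) x = wf z A B (idx x) x"
    and "is_solution (pstep n t p) z (\<lambda>x. uf z A B (idx x) x)"
proof -
  have m1: "\<And>k. k \<in> {1..n} \<Longrightarrow> uf z A B (k - 1) (t k) = uf z A B k (t k)"
    using matching rec by blast
  have m2: "\<And>k. k \<in> {1..n} \<Longrightarrow> wf z A B (k - 1) (t k) = wf z A B k (t k)"
    using matching rec by blast
  have P1: "\<And>x. x \<notin> Tset \<Longrightarrow> ((\<lambda>x. uf z A B (idx x) x) has_vector_derivative duf z A B (idx x) x) (at x)"
     "\<And>x. isCont (\<lambda>x. uf z A B (idx x) x) x" "loc_abs_cont (\<lambda>x. uf z A B (idx x) x)"
    by (rule piecewise[of "uf z A B" "duf z A B"]; (rule uf_der cont_duf m1 | assumption)+)+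
  have P2: "\<And>x. x \<notin> Tset \<Longrightarrow> ((\<lambda>x. wf z A B (idx x) x) has_vector_derivative dwf z A B (idx x) x) (at x)"
     "\<And>x. isCont (\<lambda>x. wf z A B (idx x) x) x" "loc_abs_cont (\<lambda>x. wf z A B (idx x) x)"
    by (rule piecewise[of "wf z A B" "dwf z A B"]; (rule wf_der cont_dwf m2 | assumption)+)+
  show "isCont (\<lambda>x. uf z A B (idx x) x) x" for x by (rule P1(2))
  show "isCont (\<lambda>x. wf z A B (idx x) x) x" for x by (rule P2(2))
  show D1: "((\<lambda>x. uf z A B (idx x) x) has_vector_derivative duf z A B (idx x) x) (at x)" if "x \<notin> Tset" for x
    by (rule P1(1)[OF that])
  show D2: "((\<lambda>x. wf z A B (idx x) x) has_vector_derivative (- z * uf z A B (idx x) x)) (at x)" if "x \<notin> Tset" for x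
    using P2(1)[OF that] dwf_eq[OF idx_le] by simp
  show E: "complex_of_real (pstep n t p x) * duf z A B (idx x) x = wf z A B (idx x) x" for x
    by (simp add: pstep_idx wf_def)
  show "is_solution (pstep n t p) z (\<lambda>x. uf z A B (idx x) x)"
    unfolding is_solution_def
  proof (intro conjI exI[of _ "\<lambda>x. wf z A B (idx x) x"])
    show "loc_abs_cont (\<lambda>x. uf z A B (idx x) x)" by (rule P1(3))
    show "loc_abs_cont (\<lambda>x. wf z A B (idx x) x)" by (rule P2(3))
    show "AE x in lborel. \<exists>d. ((\<lambda>x. uf z A B (idx x) x) has_vector_derivative d) (at x) \<and>
        complex_of_real (pstep n t p x) * d = wf z A B (idx x) x"
      using AE_notT by eventually_elim (use D1 E in blast)
    show "AE x in lborel. ((\<lambda>x. wf z A B (idx x) x) has_vector_derivative - z * uf z A B (idx x) x) (at x)"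
      using AE_notT by eventually_elim (use D2 in blast)
  qed
qed

lemma J_mono:
  fixes F G d :: "real \<Rightarrow> complex"
  assumes cF: "\<And>x. isCont F x" and cG: "\<And>x. isCont G x"
    and dF: "\<And>x. x \<notin> Tset \<Longrightarrow> (F has_vector_derivative d x) (at x)"
    and dG: "\<And>x. x \<notin> Tset \<Longrightarrow> (G has_vector_derivative (- z * F x)) (at x)"
    and pd: "\<And>x. x \<notin> Tset \<Longrightarrow> complex_of_real (pstep n t p x) * d x = G x"
    and z: "Im z \<ge> 0" and x01: "x0 \<le> x1"
  shows "Im (cnj (F x1) * G x1) \<le> Im (cnj (F x0) * G x0)"
proof -
  let ?J = "\<lambda>x. Im (cnj (F x) * G x)"
  let ?J' = "\<lambda>x. - Im z * (cmod (F x))\<^sup>2"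
  have der: "(?J has_vector_derivative ?J' x) (at x)" if x: "x \<notin> Tset" for x
  proof -
    have "((\<lambda>x. cnj (F x) * G x) has_vector_derivative (cnj (F x) * (- z * F x) + cnj (d x) * G x)) (at x)"
      by (intro has_vector_derivative_mult has_vector_derivative_cnj dF dG x)
    then have "(?J has_field_derivative Im (cnj (F x) * (- z * F x) + cnj (d x) * G x)) (at x)"
      by (rule has_field_derivative_Im)
    moreover have "Im (cnj (F x) * (- z * F x) + cnj (d x) * G x) = ?J' x"
    proof -
      have "cnj (d x) * G x = of_real (pstep n t p x) * (d x * cnj (d x))"
        by (simp flip: pd[OF x] add: mult_ac)
      also have "d x * cnj (d x) = of_real ((cmod (d x))\<^sup>2)"
        by (rule complex_norm_square[symmetric])
      finally have "cnj (d x) * G x = complex_of_real (pstep n t p x * (cmod (d x))\<^sup>2)" by simp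
      moreover have "cnj (F x) * (- z * F x) = - z * complex_of_real ((cmod (F x))\<^sup>2)"
        by (simp add: complex_norm_square[symmetric] mult_ac)
      moreover have "Im (- z * complex_of_real r1 + complex_of_real r2) = - Im z * r1" for r1 r2
        by simp
      ultimately show ?thesis by (simp only:)
    qed
    ultimately show ?thesis by (simp add: has_real_derivative_iff_has_vector_derivative)
  qed
  have cJ: "continuous_on {x0..x1} ?J"
    by (intro continuous_at_imp_continuous_on ballI continuous_intros cF cG)
  have "(?J' has_integral (?J x1 - ?J x0)) {x0..x1}"
    by (rule fundamental_theorem_of_calculus_strong[OF finite_Tset x01]) (use der cJ in auto)
  then have "((\<lambda>x. - ?J' x) has_integral - (?J x1 - ?J x0)) {x0..x1}"
    by (rule has_integral_neg)
  then have "0 \<le> - (?J x1 - ?J x0)"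
    by (rule has_integral_nonneg) (use z in auto)
  then show ?thesis by simp
qed

end

lemma cnj_sol:
  assumes "is_solution P z f"
  shows "is_solution P (cnj z) (\<lambda>x. cnj (f x))"
proof -
  have lac: "loc_abs_cont (\<lambda>x. cnj (h x))" if "loc_abs_cont h" for h :: "real \<Rightarrow> complex"
    using that unfolding loc_abs_cont_def abs_cont_on_def
    by (simp flip: complex_cnj_diff)
  from assms obtain g where g: "loc_abs_cont f" "loc_abs_cont g"
    "AE x in lborel. \<exists>d. (f has_vector_derivative d) (at x) \<and> complex_of_real (P x) * d = g x"
    "AE x in lborel. (g has_vector_derivative (- z * f x)) (at x)"
    unfolding is_solution_def by blast
  show ?thesis
    unfolding is_solution_def
  proof (intro conjI exI[of _ "\<lambda>x. cnj (g x)"])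
    show "loc_abs_cont (\<lambda>x. cnj (f x))" "loc_abs_cont (\<lambda>x. cnj (g x))" using lac g by auto
    show "AE x in lborel. \<exists>d. ((\<lambda>x. cnj (f x)) has_vector_derivative d) (at x) \<and> complex_of_real (P x) * d = cnj (g x)"
      using g(3)
    proof eventually_elim
      case (elim x)
      then obtain d where "(f has_vector_derivative d) (at x)" and eq: "complex_of_real (P x) * d = g x" by blast
      moreover have "complex_of_real (P x) * cnj d = cnj (g x)" using arg_cong[OF eq, of cnj] by simp
      ultimately show ?case
        by (intro exI[of _ "cnj d"]) (auto intro!: has_vector_derivative_cnj)
    qed
    show "AE x in lborel. ((\<lambda>x. cnj (g x)) has_vector_derivative - cnj z * cnj (f x)) (at x)"
      using g(4) by eventually_elim (drule has_vector_derivative_cnj, simp)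
  qed
qed

lemma int_right: "a > 0 \<Longrightarrow> integrable lborel (\<lambda>x. indicator {c<..} x *\<^sub>R exp (- a * x) :: real)"
proof -
  assume a: "a > 0"
  have "(\<lambda>x. exp (- a * x)) absolutely_integrable_on {c..}"
    by (intro nonnegative_absolutely_integrable_1 integrable_on_exp_minus_to_infinity a) auto
  then have "integrable lebesgue (\<lambda>x. indicator {c..} x *\<^sub>R exp (- a * x))"
    by (simp add: set_integrable_def)
  moreover have "(\<lambda>x. indicator {c..} x *\<^sub>R exp (- a * x)) \<in> borel_measurable borel"
    by (intro borel_measurable_continuous_on_indicator) (auto intro!: continuous_intros)
  then have "(\<lambda>x. indicator {c..} x *\<^sub>R exp (- a * x)) \<in> borel_measurable lborel" by simp
  ultimately have "integrable lborel (\<lambda>x. indicator {c..} x *\<^sub>R exp (- a * x))"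
    using integrable_completion by blast
  then have "set_integrable lborel {c..} (\<lambda>x. exp (- a * x))" by (simp add: set_integrable_def)
  then have "set_integrable lborel {c<..} (\<lambda>x. exp (- a * x))"
    by (rule set_integrable_subset) auto
  then show ?thesis by (simp add: set_integrable_def)
qed

lemma int_left: "a > 0 \<Longrightarrow> integrable lborel (\<lambda>x. indicator {..<c} x *\<^sub>R exp (a * x) :: real)"
proof -
  assume a: "a > 0"
  have "integrable lborel (\<lambda>x. (\<lambda>y. indicator {- c<..} y *\<^sub>R exp (- a * y) :: real) (0 + (-1) * x))"
    by (rule lborel_integrable_real_affine[OF int_right[OF a]]) simp
  moreover have "(\<lambda>x. (\<lambda>y. indicator {- c<..} y *\<^sub>R exp (- a * y) :: real) (0 + (-1) * x)) =
      (\<lambda>x. indicator {..<c} x *\<^sub>R exp (a * x))"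
    by (auto simp: fun_eq_iff indicator_def)
  ultimately show ?thesis by simp
qed

lemma L2_right:
  assumes f: "\<And>x. x > c \<Longrightarrow> f x = exp (K * of_real x)" and K: "Re K < 0"
  shows "lies_right_L2 f"
  unfolding lies_right_L2_def
proof (intro exI[of _ c] conjI)
  have eq: "(\<lambda>x. indicator {c<..} x *\<^sub>R f x) = (\<lambda>x. indicator {c<..} x *\<^sub>R exp (K * of_real x))"
    using f by (auto simp: fun_eq_iff indicator_def)
  have "(\<lambda>x. indicator {c<..} x *\<^sub>R exp (K * of_real x)) \<in> borel_measurable borel"
    by (intro borel_measurable_continuous_on_indicator) (auto intro!: continuous_intros)
  then show "set_borel_measurable lborel {c<..} f"
    unfolding set_borel_measurable_def eq by simp
  have "set_integrable lborel {c<..} (\<lambda>x. exp (- (- 2 * Re K) * x))"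
    using int_right[of "- 2 * Re K" c] K by (simp add: set_integrable_def)
  moreover have "(norm (f x))\<^sup>2 = exp (- (- 2 * Re K) * x)" if "x \<in> {c<..}" for x
    using f[of x] that by (simp add: power2_eq_square flip: exp_add)
  ultimately show "set_integrable lborel {c<..} (\<lambda>x. (norm (f x))\<^sup>2)"
    using set_integrable_cong[of lborel lborel "{c<..}" "{c<..}" "\<lambda>x. (norm (f x))\<^sup>2"] by simp
qed

lemma L2_left:
  assumes f: "\<And>x. x < c \<Longrightarrow> f x = exp (K * of_real x)" and K: "Re K > 0"
  shows "lies_left_L2 f"
  unfolding lies_left_L2_def
proof (intro exI[of _ c] conjI)
  have eq: "(\<lambda>x. indicator {..<c} x *\<^sub>R f x) = (\<lambda>x. indicator {..<c} x *\<^sub>R exp (K * of_real x))"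
    using f by (auto simp: fun_eq_iff indicator_def)
  have "(\<lambda>x. indicator {..<c} x *\<^sub>R exp (K * of_real x)) \<in> borel_measurable borel"
    by (intro borel_measurable_continuous_on_indicator) (auto intro!: continuous_intros)
  then show "set_borel_measurable lborel {..<c} f"
    unfolding set_borel_measurable_def eq by simp
  have "set_integrable lborel {..<c} (\<lambda>x. exp ((2 * Re K) * x))"
    using int_left[of "2 * Re K" c] K by (simp add: set_integrable_def)
  moreover have "(norm (f x))\<^sup>2 = exp ((2 * Re K) * x)" if "x \<in> {..<c}" for x
    using f[of x] that by (simp add: power2_eq_square flip: exp_add)
  ultimately show "set_integrable lborel {..<c} (\<lambda>x. (norm (f x))\<^sup>2)"
    using set_integrable_cong[of lborel lborel "{..<c}" "{..<c}" "\<lambda>x. (norm (f x))\<^sup>2"] by simp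
qed

lemma csqrt_pos: "Im z > 0 \<Longrightarrow> Re (csqrt z) > 0 \<and> Im (csqrt z) > 0"
proof -
  assume z: "Im z > 0"
  have "Im z = 2 * Re (csqrt z) * Im (csqrt z)"
    using Im_power2[of "csqrt z"] by simp
  then have h: "2 * Re (csqrt z) * Im (csqrt z) > 0" using z by simp
  then have "Re (csqrt z) \<noteq> 0" by auto
  then have r: "Re (csqrt z) > 0" using csqrt_principal[of z] by auto
  then have "Im (csqrt z) > 0" using h by (simp add: zero_less_mult_iff)
  then show ?thesis using r by simp
qed

lemma Im_ofreal_i: "Im (complex_of_real X * (\<i> * s)) = X * Re s" by simp

lemma Im_calc: "Im (cnj (c * E) * (c * (of_real P * (\<i> * of_real Q * s * E)))) = P * Q * (cmod c)\<^sup>2 * (cmod E)\<^sup>2 * Re s"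
proof -
  have a1: "cnj (c * E) * (c * (of_real P * (\<i> * of_real Q * s * E))) =
     (c * cnj c) * (E * cnj E) * of_real (P * Q) * (\<i> * s)"
    by (simp only: complex_cnj_mult of_real_mult mult_ac)
  have a2: "(c * cnj c) * (E * cnj E) * of_real (P * Q) * (\<i> * s) = of_real ((cmod c)\<^sup>2 * (cmod E)\<^sup>2 * (P * Q)) * (\<i> * s)"
    by (simp only: complex_norm_square of_real_mult)
  have a3: "Im (of_real ((cmod c)\<^sup>2 * (cmod E)\<^sup>2 * (P * Q)) * (\<i> * s)) = P * Q * (cmod c)\<^sup>2 * (cmod E)\<^sup>2 * Re s"
    unfolding Im_ofreal_i by (simp only: ac_simps)
  show ?thesis unfolding a1 a2 by (rule a3)
qed

lemma an_if: "f analytic_on S \<Longrightarrow> g analytic_on S \<Longrightarrow> (\<lambda>z. if P then f z else g z) analytic_on S"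
  by (cases P) auto

context stp begin

lemma Phi_plus_eq:
  assumes "a n z = 1" "b n z = 0"
  shows "Phi_plus n t (qcoef p) a b z x = uf z (\<lambda>j. a j z) (\<lambda>j. b j z) (idx x) x"
proof -
  have "Phi_plus n t (qcoef p) a b z x =
      (\<Sum>l<Suc n. if x \<in> Iset n t l then uf z (\<lambda>j. a j z) (\<lambda>j. b j z) l x else 0)"
    unfolding Phi_plus_def sum.lessThan_Suc uf_def using assms by simp
  also have "\<dots> = uf z (\<lambda>j. a j z) (\<lambda>j. b j z) (idx x) x"
    unfolding lessThan_Suc_atMost by (rule sum_Iset)
  finally show ?thesis .
qed

lemma Phi_minus_eq:
  assumes "a 0 z = 0" "b 0 z = 1"
  shows "Phi_minus n t (qcoef p) a b z x = uf z (\<lambda>j. a j z) (\<lambda>j. b j z) (idx x) x"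
proof -
  have "(\<Sum>j\<le>n. if x \<in> Iset n t j then uf z (\<lambda>j. a j z) (\<lambda>j. b j z) j x else 0) =
     (if x \<in> Iset n t 0 then uf z (\<lambda>j. a j z) (\<lambda>j. b j z) 0 x else 0) +
     (\<Sum>j\<in>{1..n}. if x \<in> Iset n t j then uf z (\<lambda>j. a j z) (\<lambda>j. b j z) j x else 0)"
    unfolding atMost_atLeast0 by (subst sum.atLeast_Suc_atMost) auto
  also have "\<dots> = Phi_minus n t (qcoef p) a b z x"
    unfolding Phi_minus_def uf_def using assms by simp
  finally show ?thesis using sum_Iset[of x "\<lambda>j. uf z (\<lambda>j. a j z) (\<lambda>j. b j z) j x"] by simp
qed

lemma idx_right: "x > t n \<Longrightarrow> idx x = n"
  using Iset_iff[of n x] n_ge by (simp add: Iset_def)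

lemma idx_left: "x \<le> t 1 \<Longrightarrow> idx x = 0"
  using Iset_iff[of 0 x] by (simp add: Iset_def)

lemma indep:
  assumes z: "Im z > 0"
    and rP: "\<And>k. k \<in> {1..n} \<Longrightarrow> (AP k, BP k) = Lf t (qcoef p) k z (AP (k - 1), BP (k - 1))"
    and P1: "AP n = 1" and P0: "BP n = 0"
    and rM: "\<And>k. k \<in> {1..n} \<Longrightarrow> (AM k, BM k) = Lf t (qcoef p) k z (AM (k - 1), BM (k - 1))"
    and M0: "AM 0 = 0" and M1: "BM 0 = 1"
    and H: "\<And>x. c1 * uf z AP BP (idx x) x + c2 * uf z AM BM (idx x) x = 0"
  shows "c1 = 0 \<and> c2 = 0"
proof -
  have sp: "Re (csqrt z) > 0" "Im (csqrt z) > 0" using csqrt_pos[OF z] by auto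
  define x1 where "x1 = t n + 1"
  define x0 where "x0 = t 1"
  have i1: "idx x1 = n" using idx_right by (simp add: x1_def)
  have i0: "idx x0 = 0" using idx_left by (simp add: x0_def)
  have x01: "x0 \<le> x1" using t_le[of 1 n] n_ge by (simp add: x0_def x1_def)
  have x1T: "x1 \<notin> Tset"
  proof
    assume "x1 \<in> Tset"
    then obtain j where "j \<in> {1..n}" "x1 = t j" by (auto simp: Tset_def)
    then show False using t_le[of j n] by (simp add: x1_def)
  qed
  define E1 where "E1 = exp (\<i> * of_real (qcoef p n) * csqrt z * of_real x1)"
  define E0 where "E0 = exp (- \<i> * of_real (qcoef p 0) * csqrt z * of_real x0)"
  have Fp1: "uf z AP BP (idx x1) x1 = E1" by (simp add: i1 uf_def P1 P0 E1_def)
  have Fm0: "uf z AM BM (idx x0) x0 = E0" by (simp add: i0 uf_def M0 M1 E0_def)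
  have E1nz: "E1 \<noteq> 0" "E0 \<noteq> 0" by (simp_all add: E1_def E0_def)
  show ?thesis
  proof (cases "c2 = 0")
    case True
    then have "c1 * E1 = 0" using H[of x1] Fp1 by simp
    then show ?thesis using True E1nz by simp
  next
    case False
    define c where "c = - c1 / c2"
    have FmEq: "uf z AM BM (idx x) x = c * uf z AP BP (idx x) x" for x
      using H[of x] False unfolding c_def by (simp add: field_simps add_eq_0_iff)
    have cnz: "c \<noteq> 0" using FmEq[of x0] Fm0 E1nz by auto
    have dM: "((\<lambda>x. uf z AM BM (idx x) x) has_vector_derivative duf z AM BM (idx x1) x1) (at x1)"
      using gen_sol(3)[of AM BM z x1] rM x1T by blast
    have dP: "((\<lambda>x. uf z AP BP (idx x) x) has_vector_derivative duf z AP BP (idx x1) x1) (at x1)"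
      using gen_sol(3)[of AP BP z x1] rP x1T by blast
    have dM': "((\<lambda>x. uf z AM BM (idx x) x) has_vector_derivative c * duf z AP BP (idx x1) x1) (at x1)"
      unfolding FmEq by (rule has_vector_derivative_mult_right[OF dP])
    have du: "duf z AM BM (idx x1) x1 = c * duf z AP BP (idx x1) x1"
      using vector_derivative_unique_at[OF dM dM'] .
    have GM1: "wf z AM BM (idx x1) x1 = c * (of_real (p n) * (\<i> * of_real (qcoef p n) * csqrt z * E1))"
      unfolding wf_def du by (simp add: i1 duf_def P1 P0 E1_def mult_ac)
    have FM1: "uf z AM BM (idx x1) x1 = c * E1" using FmEq[of x1] Fp1 by simp
    have GM0: "wf z AM BM (idx x0) x0 = 1 * (of_real (p 0) * (\<i> * of_real (- qcoef p 0) * csqrt z * E0))"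
      by (simp add: wf_def i0 duf_def M0 M1 E0_def)
    have FM0: "uf z AM BM (idx x0) x0 = 1 * E0" using Fm0 by simp
    have "Im (cnj (uf z AM BM (idx x1) x1) * wf z AM BM (idx x1) x1) \<le>
          Im (cnj (uf z AM BM (idx x0) x0) * wf z AM BM (idx x0) x0)"
    proof (rule J_mono[where d="\<lambda>x. duf z AM BM (idx x) x"])
      show "\<And>x. isCont (\<lambda>x. uf z AM BM (idx x) x) x" using gen_sol(1)[of AM BM z] rM by blast
      show "\<And>x. isCont (\<lambda>x. wf z AM BM (idx x) x) x" using gen_sol(2)[of AM BM z] rM by blast
      show "\<And>x. x \<notin> Tset \<Longrightarrow> ((\<lambda>x. uf z AM BM (idx x) x) has_vector_derivative duf z AM BM (idx x) x) (at x)"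
        using gen_sol(3)[of AM BM z] rM by blast
      show "\<And>x. x \<notin> Tset \<Longrightarrow> ((\<lambda>x. wf z AM BM (idx x) x) has_vector_derivative - z * uf z AM BM (idx x) x) (at x)"
        using gen_sol(4)[of AM BM z] rM by blast
      show "\<And>x. x \<notin> Tset \<Longrightarrow> complex_of_real (pstep n t p x) * duf z AM BM (idx x) x = wf z AM BM (idx x) x"
        using gen_sol(5)[of AM BM z] rM by blast
    qed (use z x01 in auto)
    also have "Im (cnj (uf z AM BM (idx x0) x0) * wf z AM BM (idx x0) x0) =
        p 0 * (- qcoef p 0) * (cmod 1)\<^sup>2 * (cmod E0)\<^sup>2 * Re (csqrt z)"
      unfolding FM0 GM0 by (rule Im_calc)
    finally have ineq: "Im (cnj (uf z AM BM (idx x1) x1) * wf z AM BM (idx x1) x1) \<le>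
        p 0 * (- qcoef p 0) * (cmod 1)\<^sup>2 * (cmod E0)\<^sup>2 * Re (csqrt z)" .
    have "Im (cnj (uf z AM BM (idx x1) x1) * wf z AM BM (idx x1) x1) =
        p n * qcoef p n * (cmod c)\<^sup>2 * (cmod E1)\<^sup>2 * Re (csqrt z)"
      unfolding FM1 GM1 by (rule Im_calc)
    moreover have "p n * qcoef p n * (cmod c)\<^sup>2 * (cmod E1)\<^sup>2 * Re (csqrt z) > 0"
      using p_pos[of n] q_pos[of n] cnz E1nz sp by simp
    moreover have "p 0 * (- qcoef p 0) * (cmod 1)\<^sup>2 * (cmod E0)\<^sup>2 * Re (csqrt z) < 0"
    proof -
      have "p 0 * qcoef p 0 * (cmod E0)\<^sup>2 * Re (csqrt z) > 0"
        using p_pos[of 0] q_pos[of 0] E1nz sp by simp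
      then show ?thesis by simp
    qed
    ultimately show ?thesis using ineq by linarith
  qed
qed

end

theorem theorem3p1:
  fixes n :: nat and t :: "nat \<Rightarrow> real" and p :: "nat \<Rightarrow> real"
  assumes n_ge: "n \<ge> 1"
    and t_mono: "\<And>j. 1 \<le> j \<Longrightarrow> j < n \<Longrightarrow> t j < t (Suc j)"
    and p_pos: "\<And>j. j \<le> n \<Longrightarrow> p j > 0"
  shows "\<exists>ap bp am bm :: nat \<Rightarrow> complex \<Rightarrow> complex.
    (\<forall>l<n. ap l analytic_on slit \<and> bp l analytic_on slit) \<and>
    (\<forall>j\<in>{1..n}. am j analytic_on slit \<and> bm j analytic_on slit) \<and>
    (\<forall>z\<in>slit. ap n z = 1 \<and> bp n z = 0 \<and> am 0 z = 0 \<and> bm 0 z = 1) \<and>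
    (\<forall>z\<in>slit. is_solution (pstep n t p) z (Phi_plus n t (qcoef p) ap bp z) \<and>
               is_solution (pstep n t p) z (Phi_minus n t (qcoef p) am bm z)) \<and>
    (\<forall>x. (\<lambda>z. Phi_plus n t (qcoef p) ap bp z x) analytic_on slit \<and>
         (\<lambda>z. Phi_minus n t (qcoef p) am bm z x) analytic_on slit) \<and>
    (\<forall>z. Im z > 0 \<longrightarrow>
        fundamental_system (pstep n t p) z (Phi_plus n t (qcoef p) ap bp z) (Phi_minus n t (qcoef p) am bm z) \<and>
        lies_right_L2 (Phi_plus n t (qcoef p) ap bp z) \<and>
        lies_left_L2 (Phi_minus n t (qcoef p) am bm z)) \<and>
    (\<forall>z. Im z < 0 \<longrightarrow>
        fundamental_system (pstep n t p) z
          (\<lambda>x. cnj (Phi_plus n t (qcoef p) ap bp (cnj z) x))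
          (\<lambda>x. cnj (Phi_minus n t (qcoef p) am bm (cnj z) x)) \<and>
        lies_right_L2 (\<lambda>x. cnj (Phi_plus n t (qcoef p) ap bp (cnj z) x)) \<and>
        lies_left_L2 (\<lambda>x. cnj (Phi_minus n t (qcoef p) am bm (cnj z) x))) \<and>
    (\<forall>z\<in>slit. \<forall>k\<in>{1..n}.
        vector [ap k z, bp k z] = Lmat t (qcoef p) k z *v vector [ap (k - 1) z, bp (k - 1) z] \<and>
        vector [am k z, bm k z] = Lmat t (qcoef p) k z *v vector [am (k - 1) z, bm (k - 1) z]) \<and>
    (\<forall>k\<le>n. trig_poly_sqrt (ap k) \<and> trig_poly_sqrt (bp k) \<and>
            trig_poly_sqrt (am k) \<and> trig_poly_sqrt (bm k))"
proof -
  interpret S: stp n t p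
    using n_ge by unfold_locales (auto intro: t_mono p_pos)
  define ap where "ap = (\<lambda>k z. fst (cpr n t (qcoef p) (n - k) z))"
  define bp where "bp = (\<lambda>k z. snd (cpr n t (qcoef p) (n - k) z))"
  define am where "am = (\<lambda>k z. fst (cmr t (qcoef p) k z))"
  define bm where "bm = (\<lambda>k z. snd (cmr t (qcoef p) k z))"
  have recP: "(ap k z, bp k z) = Lf t (qcoef p) k z (ap (k - 1) z, bp (k - 1) z)" if k: "k \<in> {1..n}" for k z
  proof -
    have "n - (k - 1) = Suc (n - k)" using k by auto
    moreover have "n - (n - k) = k" using k by auto
    ultimately have "(ap (k - 1) z, bp (k - 1) z) = Mf t (qcoef p) k z (ap k z, bp k z)"
      by (simp add: ap_def bp_def)
    moreover have "Lf t (qcoef p) k z (Mf t (qcoef p) k z (ap k z, bp k z)) = (ap k z, bp k z)"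
      by (rule LM) (use k S.q_pos in auto)
    ultimately show ?thesis by simp
  qed
  have recM: "(am k z, bm k z) = Lf t (qcoef p) k z (am (k - 1) z, bm (k - 1) z)" if k: "k \<in> {1..n}" for k z
  proof -
    have "k = Suc (k - 1)" using k by auto
    then have "cmr t (qcoef p) k z = Lf t (qcoef p) k z (cmr t (qcoef p) (k - 1) z)"
      by (metis cmr.simps(2))
    then show ?thesis by (simp add: am_def bm_def)
  qed
  have bd: "ap n z = 1" "bp n z = 0" "am 0 z = 0" "bm 0 z = 1" for z
    by (simp_all add: ap_def bp_def am_def bm_def)
  have PhiP: "Phi_plus n t (qcoef p) ap bp z x = S.uf z (\<lambda>j. ap j z) (\<lambda>j. bp j z) (S.idx x) x" for z x
    by (rule S.Phi_plus_eq) (simp_all add: bd)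
  have PhiM: "Phi_minus n t (qcoef p) am bm z x = S.uf z (\<lambda>j. am j z) (\<lambda>j. bm j z) (S.idx x) x" for z x
    by (rule S.Phi_minus_eq) (simp_all add: bd)
  have solP: "is_solution (pstep n t p) z (Phi_plus n t (qcoef p) ap bp z)" for z
    unfolding PhiP by (rule S.gen_sol(6)) (rule recP)
  have solM: "is_solution (pstep n t p) z (Phi_minus n t (qcoef p) am bm z)" for z
    unfolding PhiM by (rule S.gen_sol(6)) (rule recM)
  have indep: "c1 = 0 \<and> c2 = 0"
    if z: "Im z > 0" and H: "\<forall>x. c1 * Phi_plus n t (qcoef p) ap bp z x + c2 * Phi_minus n t (qcoef p) am bm z x = 0"
    for z c1 c2
    by (rule S.indep[OF z, of "\<lambda>j. ap j z" "\<lambda>j. bp j z" "\<lambda>j. am j z" "\<lambda>j. bm j z"])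
       (use recP recM bd H in \<open>auto simp: PhiP PhiM\<close>)
  have anP: "ap l analytic_on slit \<and> bp l analytic_on slit" for l
    using cpr_props[of n t "qcoef p" "n - l"] by (simp add: ap_def bp_def)
  have anM: "am l analytic_on slit \<and> bm l analytic_on slit" for l
    using cmr_props[of t "qcoef p" l] by (simp add: am_def bm_def)
  have rightP: "Phi_plus n t (qcoef p) ap bp z x = exp ((\<i> * of_real (qcoef p n) * csqrt z) * of_real x)"
    if "x > t n" for z x
    using that by (simp add: PhiP S.idx_right S.uf_def bd)
  have leftM: "Phi_minus n t (qcoef p) am bm z x = exp ((- \<i> * of_real (qcoef p 0) * csqrt z) * of_real x)"
    if "x < t 1" for z x
    using that by (simp add: PhiM S.idx_left S.uf_def bd)
  have ReP: "Re (\<i> * of_real (qcoef p n) * csqrt z) < 0" if "Im z > 0" for z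
    using S.q_pos[of n] csqrt_pos[OF that] by simp
  have ReM: "Re (- \<i> * of_real (qcoef p 0) * csqrt z) > 0" if "Im z > 0" for z
    using S.q_pos[of 0] csqrt_pos[OF that] by simp
  have c1: "\<forall>l<n. ap l analytic_on slit \<and> bp l analytic_on slit" using anP by auto
  have c2: "\<forall>j\<in>{1..n}. am j analytic_on slit \<and> bm j analytic_on slit" using anM by auto
  have c3: "\<forall>z\<in>slit. ap n z = 1 \<and> bp n z = 0 \<and> am 0 z = 0 \<and> bm 0 z = 1" using bd by auto
  have c4: "\<forall>z\<in>slit. is_solution (pstep n t p) z (Phi_plus n t (qcoef p) ap bp z) \<and>
               is_solution (pstep n t p) z (Phi_minus n t (qcoef p) am bm z)" using solP solM by auto
  have anPhiP: "(\<lambda>z. Phi_plus n t (qcoef p) ap bp z x) analytic_on slit" for x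
    unfolding Phi_plus_def
    by (intro analytic_on_add analytic_on_sum an_if analytic_on_const analytic_on_mult anP[THEN conjunct1]
        anP[THEN conjunct2]) (auto simp: slit_def intro!: analytic_intros)
  have anPhiM: "(\<lambda>z. Phi_minus n t (qcoef p) am bm z x) analytic_on slit" for x
    unfolding Phi_minus_def
    by (intro analytic_on_add analytic_on_sum an_if analytic_on_const analytic_on_mult anM[THEN conjunct1]
        anM[THEN conjunct2]) (auto simp: slit_def intro!: analytic_intros)
  have c5: "\<forall>x. (\<lambda>z. Phi_plus n t (qcoef p) ap bp z x) analytic_on slit \<and>
         (\<lambda>z. Phi_minus n t (qcoef p) am bm z x) analytic_on slit" using anPhiP anPhiM by auto
  have c6: "\<forall>z. Im z > 0 \<longrightarrow>
        fundamental_system (pstep n t p) z (Phi_plus n t (qcoef p) ap bp z) (Phi_minus n t (qcoef p) am bm z) \<and>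
        lies_right_L2 (Phi_plus n t (qcoef p) ap bp z) \<and>
        lies_left_L2 (Phi_minus n t (qcoef p) am bm z)"
  proof (intro allI impI conjI)
    fix z :: complex
    assume z: "Im z > 0"
    show "fundamental_system (pstep n t p) z (Phi_plus n t (qcoef p) ap bp z) (Phi_minus n t (qcoef p) am bm z)"
      unfolding fundamental_system_def using solP solM indep[OF z] by blast
    show "lies_right_L2 (Phi_plus n t (qcoef p) ap bp z)"
      by (rule L2_right[OF rightP ReP[OF z]])
    show "lies_left_L2 (Phi_minus n t (qcoef p) am bm z)"
      by (rule L2_left[OF leftM ReM[OF z]])
  qed
  have c7: "\<forall>z. Im z < 0 \<longrightarrow>
        fundamental_system (pstep n t p) z
          (\<lambda>x. cnj (Phi_plus n t (qcoef p) ap bp (cnj z) x))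
          (\<lambda>x. cnj (Phi_minus n t (qcoef p) am bm (cnj z) x)) \<and>
        lies_right_L2 (\<lambda>x. cnj (Phi_plus n t (qcoef p) ap bp (cnj z) x)) \<and>
        lies_left_L2 (\<lambda>x. cnj (Phi_minus n t (qcoef p) am bm (cnj z) x))"
  proof (intro allI impI conjI)
    fix z :: complex
    assume z: "Im z < 0"
    have w: "Im (cnj z) > 0" using z by simp
    show "fundamental_system (pstep n t p) z
        (\<lambda>x. cnj (Phi_plus n t (qcoef p) ap bp (cnj z) x))
        (\<lambda>x. cnj (Phi_minus n t (qcoef p) am bm (cnj z) x))"
      unfolding fundamental_system_def
    proof (intro conjI allI impI)
      show "is_solution (pstep n t p) z (\<lambda>x. cnj (Phi_plus n t (qcoef p) ap bp (cnj z) x))"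
        using cnj_sol[OF solP[of "cnj z"]] by simp
      show "is_solution (pstep n t p) z (\<lambda>x. cnj (Phi_minus n t (qcoef p) am bm (cnj z) x))"
        using cnj_sol[OF solM[of "cnj z"]] by simp
      fix c1 c2 :: complex
      assume H: "\<forall>x. c1 * cnj (Phi_plus n t (qcoef p) ap bp (cnj z) x) + c2 * cnj (Phi_minus n t (qcoef p) am bm (cnj z) x) = 0"
      have "\<forall>x. cnj c1 * Phi_plus n t (qcoef p) ap bp (cnj z) x + cnj c2 * Phi_minus n t (qcoef p) am bm (cnj z) x = 0"
      proof
        fix x
        have "cnj (c1 * cnj (Phi_plus n t (qcoef p) ap bp (cnj z) x) + c2 * cnj (Phi_minus n t (qcoef p) am bm (cnj z) x)) = 0"
          using H by simp
        then show "cnj c1 * Phi_plus n t (qcoef p) ap bp (cnj z) x + cnj c2 * Phi_minus n t (qcoef p) am bm (cnj z) x = 0"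
          by simp
      qed
      from indep[OF w this] show "c1 = 0" "c2 = 0" by auto
    qed
    show "lies_right_L2 (\<lambda>x. cnj (Phi_plus n t (qcoef p) ap bp (cnj z) x))"
    proof (rule L2_right[where c="t n" and K="cnj (\<i> * of_real (qcoef p n) * csqrt (cnj z))"])
      fix x :: real assume "t n < x"
      then have "Phi_plus n t (qcoef p) ap bp (cnj z) x = exp ((\<i> * of_real (qcoef p n) * csqrt (cnj z)) * of_real x)"
        by (rule rightP)
      then show "cnj (Phi_plus n t (qcoef p) ap bp (cnj z) x) = exp (cnj (\<i> * of_real (qcoef p n) * csqrt (cnj z)) * of_real x)"
        by (simp only: exp_cnj complex_cnj_mult complex_cnj_complex_of_real)
    next
      show "Re (cnj (\<i> * of_real (qcoef p n) * csqrt (cnj z))) < 0"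
        using ReP[OF w] by (simp only: cnj.sel(1))
    qed
    show "lies_left_L2 (\<lambda>x. cnj (Phi_minus n t (qcoef p) am bm (cnj z) x))"
    proof (rule L2_left[where c="t 1" and K="cnj (- \<i> * of_real (qcoef p 0) * csqrt (cnj z))"])
      fix x :: real assume "x < t 1"
      then have "Phi_minus n t (qcoef p) am bm (cnj z) x = exp ((- \<i> * of_real (qcoef p 0) * csqrt (cnj z)) * of_real x)"
        by (rule leftM)
      then show "cnj (Phi_minus n t (qcoef p) am bm (cnj z) x) = exp (cnj (- \<i> * of_real (qcoef p 0) * csqrt (cnj z)) * of_real x)"
        by (simp only: exp_cnj complex_cnj_mult complex_cnj_complex_of_real)
    next
      show "Re (cnj (- \<i> * of_real (qcoef p 0) * csqrt (cnj z))) > 0"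
        using ReM[OF w] by (simp only: cnj.sel(1))
    qed
  qed
  have c8: "\<forall>z\<in>slit. \<forall>k\<in>{1..n}.
        vector [ap k z, bp k z] = Lmat t (qcoef p) k z *v vector [ap (k - 1) z, bp (k - 1) z] \<and>
        vector [am k z, bm k z] = Lmat t (qcoef p) k z *v vector [am (k - 1) z, bm (k - 1) z]"
  proof (intro ballI conjI)
    fix z k assume k: "k \<in> {1..n}"
    show "vector [ap k z, bp k z] = Lmat t (qcoef p) k z *v vector [ap (k - 1) z, bp (k - 1) z]"
      unfolding Lmat_Lf recP[OF k, of z, symmetric] by simp
    show "vector [am k z, bm k z] = Lmat t (qcoef p) k z *v vector [am (k - 1) z, bm (k - 1) z]"
      unfolding Lmat_Lf recM[OF k, of z, symmetric] by simp
  qed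
  have c9: "\<forall>k\<le>n. trig_poly_sqrt (ap k) \<and> trig_poly_sqrt (bp k) \<and>
            trig_poly_sqrt (am k) \<and> trig_poly_sqrt (bm k)"
  proof (intro allI impI conjI)
    fix k
    show "trig_poly_sqrt (ap k)" "trig_poly_sqrt (bp k)"
      using cpr_props[of n t "qcoef p" "n - k"] by (simp_all add: ap_def bp_def)
    show "trig_poly_sqrt (am k)" "trig_poly_sqrt (bm k)"
      using cmr_props[of t "qcoef p" k] by (simp_all add: am_def bm_def)
  qed
  show ?thesis
    by (rule exI[of _ ap], rule exI[of _ bp], rule exI[of _ am], rule exI[of _ bm])
       (intro conjI c1 c2 c3 c4 c5 c6 c7 c8 c9)
qed

end
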